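(* Let $F:\mathcal{P}(V,A)\to S_2(A)$ be a non-Marian, reducible, weakly viable consular election rule satisfying SPP and SPO. Let $R\subseteq S_2(A)$ be the range of $F$ and $D=\{\alpha(L)|_R : L \text{ a linear order on } A\}$. Then $D$ is not a linked domain over $R$.
   Context: $V$ is a finite nonempty set of voters, $A$ a finite set of alternatives; a profile $P$ assigns to each voter $i$ a linear order $P_i$ on $A$; $P_i'P_{-i}$ replaces voter $i$'s order by $P_i'$; $P|_B$ is the profile of restrictions to $B\subseteq A$. $S_2(A)$ is the set of 2-element subsets of $A$; a consular election rule is a map $F:\mathcal{P}(V,A)\to S_2(A)$. SPO: for all $P$, $i$, $P_i'$, $\mathrm{best}(P_i,F(P))\succeq_i\mathrm{best}(P_i,F(P_i'P_{-i}))$; SPP: same with $\mathrm{worst}$, where $\mathrm{best}(P_i,W)$, $\mathrm{worst}(P_i,W)$ are the $P_i$-best and $P_i$-worst elements of $W$. Weakly viable: every $a\in A$ lies in $F(P)$ for some $P$. Marian: some $m\in A$ lies in $F(P)$ for every $P$. Reducible: there is a partition $A=B\uplus C$ and social choice functions $G:\mathcal{P}(V,B)\to B$, $H:\mathcal{P}(V,C)\to C$ with $F(P)=\{G(P|_B),H(P|_C)\}$ for all $P$. For a linear order $L$ on $A$, $\alpha(L)$ is the linear order on $S_2(A)$ with $X$ above $Y$ iff $\mathrm{best}(L,X)$ is above $\mathrm{best}(L,Y)$ in $L$, or they are equal and $\mathrm{worst}(L,X)$ is above $\mathrm{worst}(L,Y)$; $\alpha(L)|_R$ is its restriction to $R$.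 In a domain $D$ of linear orders over $R$, $x,y\in R$ are connected if some order in $D$ ranks $x$ first and $y$ second and some order in $D$ ranks $y$ first and $x$ second; $D$ is linked if $R$ can be enumerated $x_1,\dots,x_q$ with $x_1$ connected to $x_2$ and each $x_j$ ($j\ge3$) connected to at least two of $x_1,\dots,x_{j-1}$. *)

theory Defs
  imports Main
begin

text \<open>A linear order on a set X is a relation L with (x,y) in L meaning
  x is ranked weakly above y (library notion linear_order_on).\<close>

definition profiles :: "'v set \<Rightarrow> 'a set \<Rightarrow> ('v \<Rightarrow> 'a rel) set" where
  "profiles V X = {P. (\<forall>i\<in>V. linear_order_on X (P i)) \<and> (\<forall>i. i \<notin> V \<longrightarrow> P i = {})}"

definition restrict_profile :: "('v \<Rightarrow> 'a rel) \<Rightarrow> 'a set \<Rightarrow> ('v \<Rightarrow> 'a rel)" where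
  "restrict_profile P B = (\<lambda>i. P i \<inter> (B \<times> B))"

definition S2 :: "'a set \<Rightarrow> 'a set set" where
  "S2 A = {W. W \<subseteq> A \<and> card W = 2}"

definition best :: "'a rel \<Rightarrow> 'a set \<Rightarrow> 'a" where
  "best L W = (THE x. x \<in> W \<and> (\<forall>y\<in>W. (x, y) \<in> L))"

definition worst :: "'a rel \<Rightarrow> 'a set \<Rightarrow> 'a" where
  "worst L W = (THE x. x \<in> W \<and> (\<forall>y\<in>W. (y, x) \<in> L))"

definition consular_rule :: "'v set \<Rightarrow> 'a set \<Rightarrow> (('v \<Rightarrow> 'a rel) \<Rightarrow> 'a set) \<Rightarrow> bool" where
  "consular_rule V A F = (\<forall>P\<in>profiles V A. F P \<in> S2 A)"

definition SPO :: "'v set \<Rightarrow> 'a set \<Rightarrow> (('v \<Rightarrow> 'a rel) \<Rightarrow> 'a set) \<Rightarrow> bool" where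
  "SPO V A F = (\<forall>P\<in>profiles V A. \<forall>i\<in>V. \<forall>L. linear_order_on A L \<longrightarrow>
      (best (P i) (F P), best (P i) (F (P(i := L)))) \<in> P i)"

definition SPP :: "'v set \<Rightarrow> 'a set \<Rightarrow> (('v \<Rightarrow> 'a rel) \<Rightarrow> 'a set) \<Rightarrow> bool" where
  "SPP V A F = (\<forall>P\<in>profiles V A. \<forall>i\<in>V. \<forall>L. linear_order_on A L \<longrightarrow>
      (worst (P i) (F P), worst (P i) (F (P(i := L)))) \<in> P i)"

definition weakly_viable :: "'v set \<Rightarrow> 'a set \<Rightarrow> (('v \<Rightarrow> 'a rel) \<Rightarrow> 'a set) \<Rightarrow> bool" where
  "weakly_viable V A F = (\<forall>a\<in>A. \<exists>P\<in>profiles V A. a \<in> F P)"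

definition marian :: "'v set \<Rightarrow> 'a set \<Rightarrow> (('v \<Rightarrow> 'a rel) \<Rightarrow> 'a set) \<Rightarrow> bool" where
  "marian V A F = (\<exists>m\<in>A. \<forall>P\<in>profiles V A. m \<in> F P)"

definition reducible :: "'v set \<Rightarrow> 'a set \<Rightarrow> (('v \<Rightarrow> 'a rel) \<Rightarrow> 'a set) \<Rightarrow> bool" where
  "reducible V A F = (\<exists>B C G H. B \<union> C = A \<and> B \<inter> C = {} \<and>
      (\<forall>P\<in>profiles V B. G P \<in> B) \<and> (\<forall>P\<in>profiles V C. H P \<in> C) \<and>
      (\<forall>P\<in>profiles V A. F P = {G (restrict_profile P B), H (restrict_profile P C)}))"

definition alpha :: "'a set \<Rightarrow> 'a rel \<Rightarrow> 'a set rel" where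
  "alpha A L = {(X, Y). X \<in> S2 A \<and> Y \<in> S2 A \<and>
      ((best L X \<noteq> best L Y \<and> (best L X, best L Y) \<in> L) \<or>
       (best L X = best L Y \<and> (worst L X, worst L Y) \<in> L))}"

definition first_second :: "'b set \<Rightarrow> 'b rel \<Rightarrow> 'b \<Rightarrow> 'b \<Rightarrow> bool" where
  "first_second R Ord x y = (x \<in> R \<and> y \<in> R \<and> x \<noteq> y \<and> (\<forall>z\<in>R. (x, z) \<in> Ord) \<and>
      (\<forall>z\<in>R - {x}. (y, z) \<in> Ord))"

definition connected_in :: "'b set \<Rightarrow> 'b rel set \<Rightarrow> 'b \<Rightarrow> 'b \<Rightarrow> bool" where
  "connected_in R D x y = ((\<exists>Ord\<in>D. first_second R Ord x y) \<and> (\<exists>Ord\<in>D. first_second R Ord y x))"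

definition linked :: "'b set \<Rightarrow> 'b rel set \<Rightarrow> bool" where
  "linked R D = (\<exists>xs. distinct xs \<and> set xs = R \<and> length xs \<ge> 2 \<and>
      connected_in R D (xs ! 0) (xs ! 1) \<and>
      (\<forall>j. 2 \<le> j \<and> j < length xs \<longrightarrow>
         2 \<le> card {k. k < j \<and> connected_in R D (xs ! j) (xs ! k)}))"

end

theory Submission imports Defs begin

lemma two_elems: assumes "2 \<le> card S" shows "\<exists>a b. a \<in> S \<and> b \<in> S \<and> a \<noteq> b"
proof (rule ccontr)
  assume "\<not> ?thesis"
  hence "\<forall>a\<in>S. \<forall>b\<in>S. a = b" by blast
  moreover have fin: "finite S" using assms card.infinite by fastforce
  ultimately have "card S \<le> Suc 0" using card_le_Suc0_iff_eq[OF fin] by blast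
  with assms show False by simp
qed

lemma lin_restrict: assumes "linear_order_on A L" "B \<subseteq> A" shows "linear_order_on B (L \<inter> B \<times> B)"
  using assms unfolding order_on_defs refl_on_def trans_def antisym_def total_on_def by blast

lemma lin_combine: assumes "linear_order_on A L1" "linear_order_on A L2" "B \<union> C = A" "B \<inter> C = {}"
  shows "linear_order_on A ((L1 \<inter> B \<times> B) \<union> (L2 \<inter> C \<times> C) \<union> B \<times> C)"
proof -
  let ?M = "(L1 \<inter> B \<times> B) \<union> (L2 \<inter> C \<times> C) \<union> B \<times> C"
  have r1: "refl_on A L1" "trans L1" "antisym L1" "total_on A L1"
    using assms(1) unfolding order_on_defs by auto
  have r2: "refl_on A L2" "trans L2" "antisym L2" "total_on A L2"
    using assms(2) unfolding order_on_defs by auto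
  have "?M \<subseteq> A \<times> A" using assms(3) by blast
  moreover have "refl_on A ?M"
    unfolding refl_on_def using r1(1) r2(1) assms(3) unfolding refl_on_def by blast
  moreover have "trans ?M"
  proof (rule transI)
    fix x y z assume xy: "(x,y) \<in> ?M" and yz: "(y,z) \<in> ?M"
    show "(x,z) \<in> ?M"
    proof (cases "x \<in> B")
      case xB: True
      show ?thesis
      proof (cases "z \<in> B")
        case True
        then have "y \<in> B" using xy yz assms(4) by blast
        then have "(x,y) \<in> L1" "(y,z) \<in> L1" using xy yz xB True assms(4) by blast+
        then show ?thesis using r1(2) xB True by (blast dest: transD)
      next
        case False
        then have "z \<in> C" using yz by blast
        then show ?thesis using xB by blast
      qed
    next
      case xnB: False
      then have xC: "x \<in> C" "y \<in> C" using xy by blast+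
      then have yz2: "z \<in> C" "(y,z) \<in> L2" using yz assms(4) by blast+
      have "(x,y) \<in> L2" using xy xC xnB by blast
      then show ?thesis using r2(2) yz2 xC by (blast dest: transD)
    qed
  qed
  moreover have "antisym ?M"
  proof (rule antisymI)
    fix x y assume "(x,y) \<in> ?M" "(y,x) \<in> ?M"
    then have "((x,y) \<in> L1 \<and> (y,x) \<in> L1) \<or> ((x,y) \<in> L2 \<and> (y,x) \<in> L2)" using assms(4) by blast
    then show "x = y" using r1(3) r2(3) by (blast dest: antisymD)
  qed
  moreover have "total_on A ?M"
    unfolding total_on_def
  proof (intro ballI impI)
    fix x y assume xy: "x \<in> A" "y \<in> A" "x \<noteq> y"
    show "(x,y) \<in> ?M \<or> (y,x) \<in> ?M"
    proof (cases "x \<in> B")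
      case True
      show ?thesis
      proof (cases "y \<in> B")
        case True
        then show ?thesis using r1(4) \<open>x \<in> B\<close> xy unfolding total_on_def by blast
      next
        case False then show ?thesis using \<open>x \<in> B\<close> xy assms(3) by blast
      qed
    next
      case False
      then have "x \<in> C" using xy assms(3) by blast
      show ?thesis
      proof (cases "y \<in> B")
        case True then show ?thesis using \<open>x \<in> C\<close> by blast
      next
        case False
        then have "y \<in> C" using xy assms(3) by blast
        then show ?thesis using r2(4) \<open>x \<in> C\<close> xy unfolding total_on_def by blast
      qed
    qed
  qed
  ultimately show ?thesis unfolding order_on_defs by blast
qed

lemma best_worst_pair: assumes "linear_order_on A L" "a \<in> A" "b \<in> A" "a \<noteq> b" "(a,b) \<in> L"
  shows "best L {a,b} = a \<and> worst L {a,b} = b"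
proof -
  have r: "(a,a) \<in> L" "(b,b) \<in> L" using assms unfolding order_on_defs refl_on_def by auto
  have an: "(b,a) \<notin> L" using assms unfolding order_on_defs antisym_def by auto
  show ?thesis unfolding best_def worst_def
    by (rule conjI; rule the_equality) (use r an assms(5) in auto)
qed

lemma S2_pair: assumes "W \<in> S2 A" "linear_order_on A L"
  shows "\<exists>a b. W = {a,b} \<and> a \<noteq> b \<and> (a,b) \<in> L \<and> a \<in> A \<and> b \<in> A"
proof -
  from assms(1) obtain a b where W: "W = {a,b}" "a \<noteq> b" unfolding S2_def by (auto simp: card_2_iff)
  with assms(1) have ab: "a \<in> A" "b \<in> A" unfolding S2_def by auto
  with assms(2) W(2) have "(a,b) \<in> L \<or> (b,a) \<in> L" unfolding order_on_defs total_on_def by auto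
  thus ?thesis using W ab by (metis insert_commute)
qed

lemma conn_inter:
  assumes RS: "R \<subseteq> S2 A" and cl: "\<forall>X\<in>R. \<forall>Y\<in>R. X \<inter> Y = {} \<longrightarrow> (\<forall>u\<in>X. \<exists>v\<in>Y. {u,v} \<in> R)"
    and c: "connected_in R {alpha A L \<inter> (R \<times> R) | L. linear_order_on A L} X Y"
  shows "X \<inter> Y \<noteq> {}"
proof
  assume dis: "X \<inter> Y = {}"
  from c obtain L where L: "linear_order_on A L" and fs: "first_second R (alpha A L \<inter> (R \<times> R)) X Y"
    unfolding connected_in_def by blast
  from fs have XR: "X \<in> R" "Y \<in> R" and XY: "(X,Y) \<in> alpha A L" and YZ: "\<forall>Z\<in>R-{X}. (Y,Z) \<in> alpha A L"
    unfolding first_second_def by auto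
  obtain x1 x2 where X: "X = {x1,x2}" "x1 \<noteq> x2" "(x1,x2) \<in> L" "x1 \<in> A" "x2 \<in> A"
    using S2_pair[OF _ L] XR RS by blast
  obtain y1 y2 where Y: "Y = {y1,y2}" "y1 \<noteq> y2" "(y1,y2) \<in> L" "y1 \<in> A" "y2 \<in> A"
    using S2_pair[OF _ L] XR RS by blast
  have bX: "best L X = x1" using best_worst_pair[OF L] X by auto
  have bY: "best L Y = y1" using best_worst_pair[OF L] Y by auto
  have ne: "x1 \<noteq> y1" using dis X Y by auto
  have alt: "\<And>X Y. (X,Y) \<in> alpha A L \<Longrightarrow> (best L X \<noteq> best L Y \<and> (best L X, best L Y) \<in> L) \<or> (best L X = best L Y \<and> (worst L X, worst L Y) \<in> L)"
    unfolding alpha_def by simp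
  have d1: "(x1 \<noteq> y1 \<and> (x1, y1) \<in> L) \<or> (x1 = y1 \<and> (worst L X, worst L Y) \<in> L)"
    using alt[OF XY] by (simp only: bX bY)
  have x1y1: "(x1,y1) \<in> L" using d1 ne by blast
  have cl2: "\<forall>u\<in>X. \<exists>v\<in>Y. {u,v} \<in> R" using cl XR dis by blast
  have "x1 \<in> X" using X(1) by simp
  then obtain v where v: "v \<in> Y" "{x1,v} \<in> R" using cl2 by blast
  have "(y1,v) \<in> L" using v Y L unfolding order_on_defs refl_on_def by auto
  hence x1v: "(x1,v) \<in> L" using x1y1 L unfolding order_on_defs trans_def by blast
  have vv: "v \<noteq> x1" "v \<in> A" using v dis X Y by auto
  hence bZ: "best L {x1,v} = x1" using best_worst_pair[OF L] x1v X(4) by auto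
  have "{x1,v} \<noteq> X" using v dis X by auto
  hence "(Y,{x1,v}) \<in> alpha A L" using YZ v by auto
  hence "(best L Y \<noteq> best L {x1,v} \<and> (best L Y, best L {x1,v}) \<in> L) \<or> (best L Y = best L {x1,v} \<and> (worst L Y, worst L {x1,v}) \<in> L)"
    by (rule alt)
  hence "(y1 \<noteq> x1 \<and> (y1, x1) \<in> L) \<or> (y1 = x1 \<and> (worst L Y, worst L {x1,v}) \<in> L)"
    by (simp only: bY bZ)
  hence "(y1,x1) \<in> L" using ne by blast
  with x1y1 L ne show False unfolding order_on_defs antisym_def by auto
qed

lemma chain:
  assumes part: "\<forall>X\<in>R. \<exists>b\<in>B. \<exists>c\<in>C. X = {b,c}" and BC: "B \<inter> C = {}"
    and xs: "set xs = R" "distinct xs"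
    and conn: "\<And>X Y. cn X Y \<Longrightarrow> X \<inter> Y \<noteq> {}"
    and e: "e \<in> B" "e \<in> xs!0" "e \<in> xs!1"
    and step: "\<forall>j. 2 \<le> j \<and> j < length xs \<longrightarrow> 2 \<le> card {k. k<j \<and> cn (xs!j) (xs!k)}"
  shows "j < length xs \<Longrightarrow> e \<in> xs!j"
proof (induction j rule: less_induct)
  case (less j)
  show ?case
  proof (cases "j < 2")
    case True then show ?thesis using e by (cases j) (auto simp: less_Suc_eq)
  next
    case False
    then have "2 \<le> j" by simp
    then have "2 \<le> card {k. k<j \<and> cn (xs!j) (xs!k)}" using spec[OF step, of j] less.prems by blast
    then obtain k1 k2 where kk: "k1 \<in> {k. k<j \<and> cn (xs!j) (xs!k)}" "k2 \<in> {k. k<j \<and> cn (xs!j) (xs!k)}" "k1\<noteq>k2"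
      using two_elems by blast
    then have k: "k1<j" "k2<j" "k1\<noteq>k2" "cn (xs!j) (xs!k1)" "cn (xs!j) (xs!k2)" by simp_all
    have ek: "e \<in> xs!k1" "e \<in> xs!k2" using less.IH k less.prems by auto
    show ?thesis
    proof (rule ccontr)
      assume ne: "e \<notin> xs!j"
      have mem: "xs!j \<in> R" "xs!k1 \<in> R" "xs!k2 \<in> R" using xs less.prems k by auto
      obtain bj cj where j: "bj\<in>B" "cj\<in>C" "xs!j = {bj,cj}" using bspec[OF part mem(1)] by (elim bexE) simp
      obtain b1 c1 where 1: "b1\<in>B" "c1\<in>C" "xs!k1 = {b1,c1}" using bspec[OF part mem(2)] by (elim bexE) simp
      obtain b2 c2 where 2: "b2\<in>B" "c2\<in>C" "xs!k2 = {b2,c2}" using bspec[OF part mem(3)] by (elim bexE) simp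
      have i1: "xs!j \<inter> xs!k1 \<noteq> {}" "xs!j \<inter> xs!k2 \<noteq> {}" using conn k by auto
      have eb: "e = b1" "e = b2" using ek 1 2 BC e(1) by auto
      have "e \<noteq> bj" "e \<noteq> cj" using ne j by auto
      have "cj = c1" using i1(1) j 1 eb \<open>e \<noteq> bj\<close> BC by auto
      moreover have "cj = c2" using i1(2) j 2 eb \<open>e \<noteq> bj\<close> BC by auto
      ultimately have "xs!k1 = xs!k2" using 1 2 eb by simp
      hence "k1 = k2" using xs(2) k(1,2) less.prems by (simp add: nth_eq_iff_index_eq)
      with k show False by simp
    qed
  qed
qed

lemma restr_prof: assumes "P \<in> profiles V A" "B \<subseteq> A" shows "restrict_profile P B \<in> profiles V B"
proof -
  have "\<forall>i\<in>V. linear_order_on B (P i \<inter> B \<times> B)"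
    using assms(1) lin_restrict[OF _ assms(2)] unfolding profiles_def by blast
  moreover have "\<forall>i. i \<notin> V \<longrightarrow> P i \<inter> B \<times> B = {}" using assms(1) unfolding profiles_def by simp
  ultimately show ?thesis unfolding profiles_def restrict_profile_def by simp
qed

theorem proposition55:
  fixes V :: "'v set" and A :: "'a set" and F :: "('v \<Rightarrow> 'a rel) \<Rightarrow> 'a set"
  assumes "finite V" and "V \<noteq> {}" and "finite A"
    and "consular_rule V A F"
    and "\<not> marian V A F" and "reducible V A F" and "weakly_viable V A F"
    and "SPP V A F" and "SPO V A F"
  shows "\<not> linked (F ` profiles V A) {alpha A L \<inter> (F ` profiles V A \<times> F ` profiles V A) | L. linear_order_on A L}"
proof
  define R where "R = F ` profiles V A"
  assume lk: "linked (F ` profiles V A) {alpha A L \<inter> (F ` profiles V A \<times> F ` profiles V A) | L. linear_order_on A L}"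
  from assms(6) obtain B C G H where BC: "B \<union> C = A" "B \<inter> C = {}"
    and G: "\<forall>P\<in>profiles V B. G P \<in> B" and H: "\<forall>P\<in>profiles V C. H P \<in> C"
    and FP: "\<forall>P\<in>profiles V A. F P = {G (restrict_profile P B), H (restrict_profile P C)}"
    unfolding reducible_def by blast
  have BA: "B \<subseteq> A" "C \<subseteq> A" using BC(1) by auto
  have RS: "R \<subseteq> S2 A" using assms(4) unfolding R_def consular_rule_def by blast
  have part: "\<forall>X\<in>R. \<exists>b\<in>B. \<exists>c\<in>C. X = {b,c}"
  proof
    fix X assume "X \<in> R"
    then obtain P where P: "P \<in> profiles V A" "X = F P" unfolding R_def by blast
    have "G (restrict_profile P B) \<in> B" using G restr_prof[OF P(1) BA(1)] by blast
    moreover have "H (restrict_profile P C) \<in> C" using H restr_prof[OF P(1) BA(2)] by blast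
    ultimately show "\<exists>b\<in>B. \<exists>c\<in>C. X = {b,c}" using FP P by auto
  qed
  have comb: "\<exists>P\<in>profiles V A. restrict_profile P B = restrict_profile P1 B \<and> restrict_profile P C = restrict_profile P2 C"
    if P12: "P1 \<in> profiles V A" "P2 \<in> profiles V A" for P1 P2
  proof
    define P where "P = (\<lambda>i. if i \<in> V then (P1 i \<inter> B \<times> B) \<union> (P2 i \<inter> C \<times> C) \<union> B \<times> C else {})"
    have "\<forall>i\<in>V. linear_order_on A (P i)"
    proof
      fix i assume i: "i \<in> V"
      with P12 have "linear_order_on A (P1 i)" "linear_order_on A (P2 i)" unfolding profiles_def by auto
      thus "linear_order_on A (P i)" using i lin_combine[OF _ _ BC] unfolding P_def by simp
    qed
    moreover have "\<forall>i. i \<notin> V \<longrightarrow> P i = {}" unfolding P_def by simp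
    ultimately show "P \<in> profiles V A" unfolding profiles_def mem_Collect_eq by (rule conjI)
    have z1: "\<forall>i. i \<notin> V \<longrightarrow> P1 i = {}" using P12(1) unfolding profiles_def by simp
    have z2: "\<forall>i. i \<notin> V \<longrightarrow> P2 i = {}" using P12(2) unfolding profiles_def by simp
    have e1: "P1 i = {}" "P2 i = {}" if "i \<notin> V" for i using z1 z2 that by simp_all
    have "restrict_profile P B = restrict_profile P1 B"
    proof (rule ext)
      fix i show "restrict_profile P B i = restrict_profile P1 B i"
      proof (cases "i \<in> V")
        case True
        hence "P i = (P1 i \<inter> B \<times> B) \<union> (P2 i \<inter> C \<times> C) \<union> B \<times> C" unfolding P_def by simp
        thus ?thesis using BC(2) unfolding restrict_profile_def by blast
      next
        case False thus ?thesis using e1 unfolding P_def restrict_profile_def by simp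
      qed
    qed
    moreover have "restrict_profile P C = restrict_profile P2 C"
    proof (rule ext)
      fix i show "restrict_profile P C i = restrict_profile P2 C i"
      proof (cases "i \<in> V")
        case True
        hence "P i = (P1 i \<inter> B \<times> B) \<union> (P2 i \<inter> C \<times> C) \<union> B \<times> C" unfolding P_def by simp
        thus ?thesis using BC(2) unfolding restrict_profile_def by blast
      next
        case False thus ?thesis using e1 unfolding P_def restrict_profile_def by simp
      qed
    qed
    ultimately show "restrict_profile P B = restrict_profile P1 B \<and> restrict_profile P C = restrict_profile P2 C" by blast
  qed
  have cl: "\<forall>X\<in>R. \<forall>Y\<in>R. X \<inter> Y = {} \<longrightarrow> (\<forall>u\<in>X. \<exists>v\<in>Y. {u,v} \<in> R)"
  proof (intro ballI impI)
    fix X Y u assume "X \<in> R" "Y \<in> R" "X \<inter> Y = {}" "u \<in> X"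
    then obtain P1 P2 where P: "P1 \<in> profiles V A" "P2 \<in> profiles V A" "X = F P1" "Y = F P2"
      unfolding R_def by blast
    from \<open>u \<in> X\<close> P FP have "u = G (restrict_profile P1 B) \<or> u = H (restrict_profile P1 C)" by auto
    then show "\<exists>v\<in>Y. {u,v} \<in> R"
    proof
      assume u: "u = G (restrict_profile P1 B)"
      obtain P where PP: "P \<in> profiles V A" "restrict_profile P B = restrict_profile P1 B" "restrict_profile P C = restrict_profile P2 C"
        using comb[OF P(1,2)] by blast
      have "F P = {u, H (restrict_profile P2 C)}" using FP PP u by simp
      hence "{u, H (restrict_profile P2 C)} \<in> R" unfolding R_def using PP(1) by (metis image_eqI)
      moreover have "H (restrict_profile P2 C) \<in> Y" using FP P by simp
      ultimately show ?thesis by blast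
    next
      assume u: "u = H (restrict_profile P1 C)"
      obtain P where PP: "P \<in> profiles V A" "restrict_profile P B = restrict_profile P2 B" "restrict_profile P C = restrict_profile P1 C"
        using comb[OF P(2,1)] by blast
      have "F P = {u, G (restrict_profile P2 B)}" using FP PP u by (simp add: insert_commute)
      hence "{u, G (restrict_profile P2 B)} \<in> R" unfolding R_def using PP(1) by (metis image_eqI)
      moreover have "G (restrict_profile P2 B) \<in> Y" using FP P by simp
      ultimately show ?thesis by blast
    qed
  qed
  from lk[folded R_def] obtain xs where xs: "distinct xs" "set xs = R" "length xs \<ge> 2"
    and c01: "connected_in R {alpha A L \<inter> (R \<times> R) | L. linear_order_on A L} (xs!0) (xs!1)"
    and step: "\<forall>j. 2 \<le> j \<and> j < length xs \<longrightarrow> 2 \<le> card {k. k<j \<and> connected_in R {alpha A L \<inter> (R \<times> R) | L. linear_order_on A L} (xs!j) (xs!k)}"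
    unfolding linked_def by blast
  have conn: "\<And>X Y. connected_in R {alpha A L \<inter> (R \<times> R) | L. linear_order_on A L} X Y \<Longrightarrow> X \<inter> Y \<noteq> {}"
    using conn_inter[OF RS cl] by blast
  obtain e where e: "e \<in> xs!0" "e \<in> xs!1" using conn[OF c01] by blast
  have "xs!0 \<in> set xs" using xs(3) by (intro nth_mem) linarith
  hence "xs!0 \<in> R" using xs(2) by simp
  hence "e \<in> A" using RS e unfolding S2_def by blast
  hence "e \<in> B \<or> e \<in> C" using BC by auto
  hence all: "\<forall>j<length xs. e \<in> xs!j"
  proof
    assume "e \<in> B"
    show ?thesis using chain[OF part BC(2) xs(2,1) conn \<open>e \<in> B\<close> e step] by blast
  next
    assume "e \<in> C"
    have part': "\<forall>X\<in>R. \<exists>b\<in>C. \<exists>c\<in>B. X = {b,c}"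
    proof
      fix X assume "X \<in> R"
      then obtain b c where bc: "b \<in> B" "c \<in> C" "X = {b,c}" using part by blast
      have "X = {c,b}" using bc(3) by (simp add: insert_commute)
      thus "\<exists>b\<in>C. \<exists>c\<in>B. X = {b,c}" using bc(1,2) by blast
    qed
    have CB: "C \<inter> B = {}" using BC by auto
    show ?thesis using chain[OF part' CB xs(2,1) conn \<open>e \<in> C\<close> e step] by blast
  qed
  have "\<forall>P\<in>profiles V A. e \<in> F P"
  proof
    fix P assume "P \<in> profiles V A"
    hence "F P \<in> set xs" using xs unfolding R_def by auto
    then obtain j where "j < length xs" "F P = xs!j" by (metis in_set_conv_nth)
    thus "e \<in> F P" using all by auto
  qed
  with \<open>e \<in> A\<close> assms(5) show False unfolding marian_def by blast
qed

end
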